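(* 1. For every $i\in\mathcal{N}$, the random variable $Z_{i,\epsilon}$ converges surely (i.e. pointwise for every outcome) to $Z_i$ as $\epsilon\to+\infty$. 2. The limit $\lim_{\epsilon\to+\infty}\gamma(\epsilon)$ exists and $$\lim_{\epsilon\to+\infty}\Big(E\{Z_{i,\epsilon}\mid A_i=0,Y_i=1\}-E\{Z_{i,\epsilon}\mid A_i=1,Y_i=1\}\Big)=E\{Z_i\mid A_i=0,Y_i=1\}-E\{Z_i\mid A_i=1,Y_i=1\},$$ i.e. the algorithm $\mathscr{A}$ is $\gamma_\infty$-fair with $\gamma_\infty=\lim_{\epsilon\to+\infty}\gamma(\epsilon)$.
   Context: There are $n$ individuals indexed by $\mathcal{N}=\{1,\dots,n\}$. Individual $i$ is described by a random tuple $(X_i,A_i,Y_i)$, with features $X_i\in\mathcal{X}$, protected attribute $A_i\in\{0,1\}$ and qualification state $Y_i\in\{0,1\}$; the tuples are i.i.d. with a common distribution $\mathsf{F}$. A fixed function $r:\mathcal{X}\to\mathcal{R}$ is given, with $\mathcal{R}\subset[0,1]$ finite, and $R_i=r(X_i)$. Conditioning events $\{A_i=a,Y_i=1\}$ are assumed to have positive probability. For $\epsilon\ge0$, the exponential mechanism $\mathscr{A}_\epsilon$ selects $i$ with probability $Z_{i,\epsilon}=\exp(\epsilon R_i/2)/\sum_{j=1}^n\exp(\epsilon R_j/2)$ given the scores, and $\gamma(\epsilon)=E\{Z_{i,\epsilon}\mid A_i=0,Y_i=1\}-E\{Z_{i,\epsilon}\mid A_i=1,Y_i=1\}$. The algorithm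 $\mathscr{A}$ selects uniformly at random among the individuals with the highest score; with $N_{\max}=|\{i: R_i=\max_jR_j\}|$, let $Z_i=0$ if $R_i\ne\max_jR_j$ and $Z_i=1/N_{\max}$ otherwise, so $Z_i$ is the probability that $\mathscr{A}$ selects $i$ given the scores. An algorithm selecting one individual is $\gamma$-fair if $\Pr\{K_i=1\mid A_i=0,Y_i=1\}-\Pr\{K_i=1\mid A_i=1,Y_i=1\}=\gamma$, where $K_i$ is the indicator that $i$ is selected. *)

theory Defs
  imports "HOL-Probability.Probability"
begin

definition score :: "('x \<Rightarrow> real) \<Rightarrow> (nat \<Rightarrow> 'a \<Rightarrow> 'x) \<Rightarrow> nat \<Rightarrow> 'a \<Rightarrow> real" where
  "score r X i \<omega> = r (X i \<omega>)"

text \<open>Selection probability of the exponential mechanism with parameter eps.\<close>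
definition Zeps :: "('x \<Rightarrow> real) \<Rightarrow> (nat \<Rightarrow> 'a \<Rightarrow> 'x) \<Rightarrow> nat \<Rightarrow> real \<Rightarrow> nat \<Rightarrow> 'a \<Rightarrow> real" where
  "Zeps r X n \<epsilon> i \<omega> =
     exp (\<epsilon> * score r X i \<omega> / 2) / (\<Sum>j\<in>{1..n}. exp (\<epsilon> * score r X j \<omega> / 2))"

definition Zmax :: "('x \<Rightarrow> real) \<Rightarrow> (nat \<Rightarrow> 'a \<Rightarrow> 'x) \<Rightarrow> nat \<Rightarrow> nat \<Rightarrow> 'a \<Rightarrow> real" where
  "Zmax r X n i \<omega> =
     (let m = Max ((\<lambda>j. score r X j \<omega>) ` {1..n});
          Nmax = card {j\<in>{1..n}. score r X j \<omega> = m}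
      in if score r X i \<omega> \<noteq> m then 0 else 1 / real Nmax)"

definition cond_expect_event :: "'a measure \<Rightarrow> ('a \<Rightarrow> real) \<Rightarrow> 'a set \<Rightarrow> real" where
  "cond_expect_event M Z B = (\<integral>\<omega>. indicator B \<omega> * Z \<omega> \<partial>M) / measure M B"

definition gamma_eps :: "'a measure \<Rightarrow> ('x \<Rightarrow> real) \<Rightarrow> (nat \<Rightarrow> 'a \<Rightarrow> 'x) \<Rightarrow> (nat \<Rightarrow> 'a \<Rightarrow> nat)
      \<Rightarrow> (nat \<Rightarrow> 'a \<Rightarrow> nat) \<Rightarrow> nat \<Rightarrow> nat \<Rightarrow> real \<Rightarrow> real" where
  "gamma_eps M r X A Y n i \<epsilon> =
     cond_expect_event M (Zeps r X n \<epsilon> i) {\<omega>\<in>space M. A i \<omega> = 0 \<and> Y i \<omega> = 1}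
   - cond_expect_event M (Zeps r X n \<epsilon> i) {\<omega>\<in>space M. A i \<omega> = 1 \<and> Y i \<omega> = 1}"

end

theory Submission
  imports Defs
begin



lemma exp_lim:
  fixes a :: real assumes "a \<le> 0"
  shows "((\<lambda>e. exp (e * a / 2)) \<longlongrightarrow> (if a = 0 then 1 else 0)) at_top"
proof (cases "a = 0")
  case True then show ?thesis by simp
next
  case False
  then have a: "a < 0" using assms by simp
  have "filterlim (\<lambda>e. e * a / 2) at_bot at_top"
  proof -
    have "filterlim (\<lambda>e. (a/2) * e) at_bot at_top"
      using a by (intro filterlim_tendsto_neg_mult_at_bot[OF tendsto_const]) (auto simp: filterlim_ident)
    then show ?thesis by (simp add: mult.commute)
  qed
  from filterlim_compose[OF exp_at_bot this] False show ?thesis by simp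
qed

lemma soft_lim:
  fixes s :: "nat \<Rightarrow> real" and S :: "nat set"
  assumes S: "finite S" "S \<noteq> {}" and i: "i \<in> S"
  defines "m \<equiv> Max (s ` S)"
  shows "((\<lambda>e. exp (e * s i / 2) / (\<Sum>j\<in>S. exp (e * s j / 2))) \<longlongrightarrow>
          (if s i \<noteq> m then 0 else 1 / real (card {j\<in>S. s j = m}))) at_top"
proof -
  have le: "s j \<le> m" if "j \<in> S" for j using S that unfolding m_def by auto
  obtain k where k: "k \<in> S" "s k = m" unfolding m_def using S
    by (metis (mono_tags, lifting) Max_in finite_imageI image_iff image_is_empty)
  have eq: "exp (e * s i / 2) / (\<Sum>j\<in>S. exp (e * s j / 2)) =
        exp (e * (s i - m) / 2) / (\<Sum>j\<in>S. exp (e * (s j - m) / 2))" for e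
  proof -
    have ex: "exp (e * t / 2) = exp (e * (t - m) / 2) * exp (e * m / 2)" for t
      by (simp only: exp_add[symmetric]) (simp add: field_simps)
    have d: "(\<Sum>j\<in>S. exp (e * s j / 2)) = (\<Sum>j\<in>S. exp (e * (s j - m) / 2)) * exp (e * m / 2)"
      by (simp only: sum_distrib_right) (rule sum.cong[OF refl ex])
    show ?thesis
      unfolding d by (subst ex[of "s i"]) simp
  qed
  have lim: "((\<lambda>e. exp (e * (s j - m) / 2)) \<longlongrightarrow> (if s j = m then 1 else 0)) at_top" if "j \<in> S" for j
    using exp_lim[of "s j - m"] le[OF that] by simp
  have num: "((\<lambda>e. exp (e * (s i - m) / 2)) \<longlongrightarrow> (if s i = m then 1 else 0)) at_top"
    using lim[OF i] .
  have den: "((\<lambda>e. \<Sum>j\<in>S. exp (e * (s j - m) / 2)) \<longlongrightarrow> (\<Sum>j\<in>S. if s j = m then 1 else 0)) at_top"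
    by (intro tendsto_sum lim)
  have cardeq: "(\<Sum>j\<in>S. if s j = m then 1 else 0::real) = real (card {j\<in>S. s j = m})"
    using S by (simp add: sum.If_cases Int_def)
  have pos: "card {j\<in>S. s j = m} > 0" using S k by (auto simp: card_gt_0_iff)
  have "((\<lambda>e. exp (e * (s i - m) / 2) / (\<Sum>j\<in>S. exp (e * (s j - m) / 2))) \<longlongrightarrow>
        (if s i = m then 1 else 0) / real (card {j\<in>S. s j = m})) at_top"
    using tendsto_divide[OF num den] pos cardeq by simp
  then show ?thesis unfolding eq by (auto)
qed

lemma dom_lim:
  fixes f :: "real \<Rightarrow> 'a \<Rightarrow> real" and M :: "'a measure"
  assumes P: "prob_space M" and B: "B \<in> sets M"
    and meas: "\<And>e. f e \<in> borel_measurable M"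
    and bnd: "\<And>e \<omega>. \<omega> \<in> space M \<Longrightarrow> \<bar>f e \<omega>\<bar> \<le> 1"
    and lim: "\<And>\<omega>. \<omega> \<in> space M \<Longrightarrow> ((\<lambda>e. f e \<omega>) \<longlongrightarrow> g \<omega>) at_top"
  shows "((\<lambda>e. \<integral>\<omega>. indicator B \<omega> * f e \<omega> \<partial>M) \<longlongrightarrow> (\<integral>\<omega>. indicator B \<omega> * g \<omega> \<partial>M)) at_top"
proof (rule tendsto_at_topI_sequentially)
  interpret prob_space M by (rule P)
  fix Xs :: "nat \<Rightarrow> real" assume Xs: "filterlim Xs at_top sequentially"
  have ptw: "(\<lambda>k. indicator B \<omega> * f (Xs k) \<omega>) \<longlonglongrightarrow> indicator B \<omega> * g \<omega>" if "\<omega> \<in> space M" for \<omega>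
    by (intro tendsto_mult tendsto_const filterlim_compose[OF lim[OF that] Xs])
  have m: "(\<lambda>\<omega>. indicator B \<omega> * f (Xs k) \<omega>) \<in> borel_measurable M" for k
    using B meas by measurable
  have gm: "(\<lambda>\<omega>. indicator B \<omega> * g \<omega>) \<in> borel_measurable M"
    by (rule borel_measurable_LIMSEQ_real[OF ptw m])
  show "(\<lambda>k. \<integral>\<omega>. indicator B \<omega> * f (Xs k) \<omega> \<partial>M) \<longlonglongrightarrow> (\<integral>\<omega>. indicator B \<omega> * g \<omega> \<partial>M)"
  proof (rule integral_dominated_convergence[where w="\<lambda>_. 1"])
    show "AE x in M. (\<lambda>k. indicator B x * f (Xs k) x) \<longlonglongrightarrow> indicator B x * g x"
      using ptw by (intro AE_I2) auto
    show "AE x in M. norm (indicator B x * f (Xs k) x) \<le> 1" for k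
      using bnd by (intro AE_I2) (auto simp: indicator_def)
  qed (use gm m in auto)
qed


theorem lemma1:
  fixes M :: "'a measure" and Mx :: "'x measure"
    and X :: "nat \<Rightarrow> 'a \<Rightarrow> 'x" and A Y :: "nat \<Rightarrow> 'a \<Rightarrow> nat"
    and r :: "'x \<Rightarrow> real" and n :: nat
    and F :: "('x \<times> nat \<times> nat) measure"
  assumes "prob_space M"
    and "n \<ge> 1"
    and "\<And>i. i \<in> {1..n} \<Longrightarrow> X i \<in> measurable M Mx"
    and "\<And>i. i \<in> {1..n} \<Longrightarrow> A i \<in> measurable M (count_space UNIV)"
    and "\<And>i. i \<in> {1..n} \<Longrightarrow> Y i \<in> measurable M (count_space UNIV)"
    and "\<And>i \<omega>. i \<in> {1..n} \<Longrightarrow> \<omega> \<in> space M \<Longrightarrow> A i \<omega> \<in> {0, 1}"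
    and "\<And>i \<omega>. i \<in> {1..n} \<Longrightarrow> \<omega> \<in> space M \<Longrightarrow> Y i \<omega> \<in> {0, 1}"
    and "prob_space.indep_vars M
           (\<lambda>_. Mx \<Otimes>\<^sub>M count_space UNIV \<Otimes>\<^sub>M count_space UNIV)
           (\<lambda>i \<omega>. (X i \<omega>, A i \<omega>, Y i \<omega>)) {1..n}"
    and "\<And>i. i \<in> {1..n} \<Longrightarrow>
           distr M (Mx \<Otimes>\<^sub>M count_space UNIV \<Otimes>\<^sub>M count_space UNIV)
             (\<lambda>\<omega>. (X i \<omega>, A i \<omega>, Y i \<omega>)) = F"
    and "r \<in> borel_measurable Mx"
    and "finite (range r)"
    and "range r \<subseteq> {0..1}"
    and "\<And>i a. i \<in> {1..n} \<Longrightarrow> a \<in> {0, 1} \<Longrightarrow>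
           measure M {\<omega>\<in>space M. A i \<omega> = a \<and> Y i \<omega> = 1} > 0"
  shows "(\<forall>i\<in>{1..n}. \<forall>\<omega>\<in>space M.
            ((\<lambda>\<epsilon>. Zeps r X n \<epsilon> i \<omega>) \<longlongrightarrow> Zmax r X n i \<omega>) at_top)
       \<and> (\<forall>i\<in>{1..n}.
            ((\<lambda>\<epsilon>. gamma_eps M r X A Y n i \<epsilon>) \<longlongrightarrow>
               cond_expect_event M (Zmax r X n i) {\<omega>\<in>space M. A i \<omega> = 0 \<and> Y i \<omega> = 1}
             - cond_expect_event M (Zmax r X n i) {\<omega>\<in>space M. A i \<omega> = 1 \<and> Y i \<omega> = 1}) at_top)"
  proof -
  interpret prob_space M by (rule assms(1))
  note Xm = assms(3) and Am = assms(4) and Ym = assms(5) and rm = assms(10)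
  have scm: "score r X j \<in> borel_measurable M" if "j \<in> {1..n}" for j
  proof -
    have "score r X j = r \<circ> X j" by (auto simp: score_def fun_eq_iff)
    then show ?thesis using measurable_comp[OF Xm[OF that] rm] by simp
  qed
  have Zm: "Zeps r X n e i \<in> borel_measurable M" if "i \<in> {1..n}" for e i
  proof -
    have "(\<lambda>\<omega>. \<Sum>j\<in>{1..n}. exp (e * score r X j \<omega> / 2)) \<in> borel_measurable M"
      by (intro borel_measurable_sum) (use scm in measurable)
    moreover have "(\<lambda>\<omega>. exp (e * score r X i \<omega> / 2)) \<in> borel_measurable M"
      using scm[OF that] by measurable
    ultimately show ?thesis unfolding Zeps_def[abs_def]
      by (intro borel_measurable_divide) auto
  qed
  have Zb: "\<bar>Zeps r X n e i \<omega>\<bar> \<le> 1" if "i \<in> {1..n}" for e i \<omega>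
  proof -
    have le: "exp (e * score r X i \<omega> / 2) \<le> (\<Sum>j\<in>{1..n}. exp (e * score r X j \<omega> / 2))"
      using that by (intro member_le_sum) auto
    have pos: "0 < (\<Sum>j\<in>{1..n}. exp (e * score r X j \<omega> / 2))"
      using that by (intro sum_pos) auto
    show ?thesis unfolding Zeps_def using le pos by auto
  qed
  have P1: "((\<lambda>\<epsilon>. Zeps r X n \<epsilon> i \<omega>) \<longlongrightarrow> Zmax r X n i \<omega>) at_top" if "i \<in> {1..n}" for i \<omega>
    using soft_lim[of "{1..n}" i "\<lambda>j. score r X j \<omega>"] that assms(2)
    unfolding Zeps_def Zmax_def Let_def by auto
  have Bm: "{\<omega>\<in>space M. A i \<omega> = a \<and> Y i \<omega> = 1} \<in> sets M" if "i \<in> {1..n}" for i a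
  proof -
    have "{\<omega>\<in>space M. A i \<omega> = a \<and> Y i \<omega> = 1} = (A i -` {a} \<inter> space M) \<inter> (Y i -` {1} \<inter> space M)"
      by auto
    also have "\<dots> \<in> sets M"
      using measurable_sets[OF Am[OF that], of "{a}"] measurable_sets[OF Ym[OF that], of "{1}"] by auto
    finally show ?thesis .
  qed
  have P2: "((\<lambda>\<epsilon>. gamma_eps M r X A Y n i \<epsilon>) \<longlongrightarrow>
               cond_expect_event M (Zmax r X n i) {\<omega>\<in>space M. A i \<omega> = 0 \<and> Y i \<omega> = 1}
             - cond_expect_event M (Zmax r X n i) {\<omega>\<in>space M. A i \<omega> = 1 \<and> Y i \<omega> = 1}) at_top"
    if i: "i \<in> {1..n}" for i
    unfolding gamma_eps_def cond_expect_event_def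
    by (intro tendsto_diff tendsto_divide tendsto_const dom_lim[OF assms(1)] Bm i Zm Zb P1) (use assms(13)[OF i, of 0] assms(13)[OF i, of 1] in auto)
  show ?thesis using P1 P2 by blast
qed

end
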